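(* Let $n\le 3$. For the house allocation setting with $n$ agents and $n$ houses described in the context, an assignment rule $f$ is support efficient if and only if it is ex post efficient.
   Context: Let $N$ be a set of $n$ agents and $H$ a set of $n$ houses. A preference profile $R$ assigns to each agent $i\in N$ a strict linear order $\succ_i$ over $H$; $\mathcal{R}$ denotes the set of all such profiles. A random assignment is a bistochastic $n\times n$ matrix $(M_{i,h})_{i\in N,h\in H}$ (nonnegative entries, all row and column sums equal to $1$); it is a deterministic assignment if all entries are in $\{0,1\}$. An assignment rule $f$ maps each $R\in\mathcal{R}$ to a random assignment $f(R)$; $f(R,i,h)$ is the probability that agent $i$ receives house $h$. A deterministic assignment $M$ is (Pareto) efficient at $R$ if there is no deterministic assignment $M'\ne M$ such that for all $i\in N$ and $h\neq h'$, $M'_{i,h'}=M_{i,h}=1$ implies $h'\succ_i h$. A rule $f$ is ex post efficient if for every $R$, $f(R)$ is a convex combination of deterministic assignments that are efficient at $R$. For a priority order $\pi$ of the agents, the serial dictatorship $SD_\pi$ lets agents in order $\pi$ successively pick their most preferred remaining house; random serial dictatorship is $RSD(R)=\frac{1}{n!}\sum_{\pi}SD_\pi(R)$, the sum over all $n!$ orders. A rule $f$ is support efficient if for all $R$, $i$, $h$: $RSD(R,i,h)=0$ implies $f(R,i,h)=0$. *)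

theory Defs
  imports Complex_Main "HOL-Combinatorics.Multiset_Permutations"
begin

text \<open>A preference of an agent is a
relation r on houses, (h, h') \<in> r meaning "h is strictly preferred to h'".\<close>

definition strict_pref :: "nat \<Rightarrow> (nat \<times> nat) set \<Rightarrow> bool" where
  "strict_pref n r \<longleftrightarrow> r \<subseteq> {..<n} \<times> {..<n} \<and> strict_linear_order_on {..<n} r"

definition profiles :: "nat \<Rightarrow> (nat \<Rightarrow> (nat \<times> nat) set) set" where
  "profiles n = {R. \<forall>i<n. strict_pref n (R i)}"

text \<open>A random assignment: bistochastic n x n matrix (entries outside the
index square are fixed to 0, so that matrices are determined by their n x n part).\<close>

definition random_assignment :: "nat \<Rightarrow> (nat \<Rightarrow> nat \<Rightarrow> real) \<Rightarrow> bool" where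
  "random_assignment n M \<longleftrightarrow>
     (\<forall>i h. 0 \<le> M i h) \<and>
     (\<forall>i h. (n \<le> i \<or> n \<le> h) \<longrightarrow> M i h = 0) \<and>
     (\<forall>i<n. (\<Sum>h<n. M i h) = 1) \<and>
     (\<forall>h<n. (\<Sum>i<n. M i h) = 1)"

definition deterministic_assignment :: "nat \<Rightarrow> (nat \<Rightarrow> nat \<Rightarrow> real) \<Rightarrow> bool" where
  "deterministic_assignment n M \<longleftrightarrow>
     random_assignment n M \<and> (\<forall>i h. M i h \<in> {0, 1})"

definition efficient_at :: "nat \<Rightarrow> (nat \<Rightarrow> (nat \<times> nat) set) \<Rightarrow> (nat \<Rightarrow> nat \<Rightarrow> real) \<Rightarrow> bool" where
  "efficient_at n R M \<longleftrightarrow>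
     deterministic_assignment n M \<and>
     \<not> (\<exists>M'. deterministic_assignment n M' \<and> M' \<noteq> M \<and>
          (\<forall>i<n. \<forall>h<n. \<forall>h'<n. h \<noteq> h' \<and> M' i h' = 1 \<and> M i h = 1 \<longrightarrow> (h', h) \<in> R i))"

definition ex_post_efficient ::
  "nat \<Rightarrow> ((nat \<Rightarrow> (nat \<times> nat) set) \<Rightarrow> nat \<Rightarrow> nat \<Rightarrow> real) \<Rightarrow> bool" where
  "ex_post_efficient n f \<longleftrightarrow>
     (\<forall>R\<in>profiles n. \<exists>S (w::(nat \<Rightarrow> nat \<Rightarrow> real) \<Rightarrow> real).
        finite S \<and> S \<subseteq> {D. efficient_at n R D} \<and>
        (\<forall>D\<in>S. 0 \<le> w D) \<and> (\<Sum>D\<in>S. w D) = 1 \<and>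
        (\<forall>i h. f R i h = (\<Sum>D\<in>S. w D * D i h)))"

definition top_house :: "(nat \<times> nat) set \<Rightarrow> nat set \<Rightarrow> nat" where
  "top_house r A = (THE h. h \<in> A \<and> (\<forall>h'\<in>A. h' \<noteq> h \<longrightarrow> (h, h') \<in> r))"

fun sd :: "(nat \<Rightarrow> (nat \<times> nat) set) \<Rightarrow> nat list \<Rightarrow> nat set \<Rightarrow> nat \<Rightarrow> nat \<Rightarrow> real" where
  "sd R [] A = (\<lambda>i h. 0)"
| "sd R (i # \<pi>) A =
     (let h = top_house (R i) A
      in (sd R \<pi> (A - {h}))(i := (\<lambda>h'. if h' = h then 1 else 0)))"

definition SD :: "nat \<Rightarrow> nat list \<Rightarrow> (nat \<Rightarrow> (nat \<times> nat) set) \<Rightarrow> nat \<Rightarrow> nat \<Rightarrow> real" where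
  "SD n \<pi> R = sd R \<pi> {..<n}"

definition RSD :: "nat \<Rightarrow> (nat \<Rightarrow> (nat \<times> nat) set) \<Rightarrow> nat \<Rightarrow> nat \<Rightarrow> real" where
  "RSD n R i h = (\<Sum>\<pi>\<in>permutations_of_set {..<n}. SD n \<pi> R i h) / fact n"

definition support_efficient ::
  "nat \<Rightarrow> ((nat \<Rightarrow> (nat \<times> nat) set) \<Rightarrow> nat \<Rightarrow> nat \<Rightarrow> real) \<Rightarrow> bool" where
  "support_efficient n f \<longleftrightarrow>
     (\<forall>R\<in>profiles n. \<forall>i h. RSD n R i h = 0 \<longrightarrow> f R i h = 0)"

definition assignment_rule ::
  "nat \<Rightarrow> ((nat \<Rightarrow> (nat \<times> nat) set) \<Rightarrow> nat \<Rightarrow> nat \<Rightarrow> real) \<Rightarrow> bool" where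
  "assignment_rule n f \<longleftrightarrow> (\<forall>R\<in>profiles n. random_assignment n (f R))"

end

theory Submission
  imports Defs
begin
fun pairs :: "'a list \<Rightarrow> ('a \<times> 'a) list" where
  "pairs [] = []" | "pairs (x#xs) = map (Pair x) xs @ pairs xs"
definition top_l :: "nat list \<Rightarrow> nat set \<Rightarrow> nat" where
  "top_l xs A = hd (filter (\<lambda>x. x \<in> A) xs)"

lemma pairs_sub: "set (pairs xs) \<subseteq> set xs \<times> set xs"
  by (induction xs) auto

lemma pairs_asym: "distinct xs \<Longrightarrow> (a,b) \<in> set (pairs xs) \<Longrightarrow> (b,a) \<notin> set (pairs xs)"
  by (induction xs) (use pairs_sub in fastforce)+

lemma pairs_total: "a \<in> set xs \<Longrightarrow> b \<in> set xs \<Longrightarrow> a \<noteq> b \<Longrightarrow>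
   (a,b) \<in> set (pairs xs) \<or> (b,a) \<in> set (pairs xs)"
  by (induction xs) auto

lemma top_l_prop: "distinct xs \<Longrightarrow> A \<subseteq> set xs \<Longrightarrow> A \<noteq> {} \<Longrightarrow>
   top_l xs A \<in> A \<and> (\<forall>h'\<in>A. h' \<noteq> top_l xs A \<longrightarrow> (top_l xs A, h') \<in> set (pairs xs))"
proof (induction xs arbitrary: A)
  case Nil then show ?case by auto
next
  case (Cons x xs)
  show ?case
  proof (cases "x \<in> A")
    case True
    then have t: "top_l (x#xs) A = x" by (simp add: top_l_def)
    have "\<forall>h'\<in>A. h' \<noteq> x \<longrightarrow> h' \<in> set xs" using Cons.prems(2) by auto
    then show ?thesis unfolding t using True by auto
  next
    case False
    then have "A \<subseteq> set xs" using Cons.prems(2) by auto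
    moreover have "distinct xs" using Cons.prems(1) by simp
    ultimately have "top_l xs A \<in> A \<and> (\<forall>h'\<in>A. h' \<noteq> top_l xs A \<longrightarrow> (top_l xs A, h') \<in> set (pairs xs))"
      using Cons.IH Cons.prems(3) by blast
    moreover have "top_l (x#xs) A = top_l xs A" using False by (simp add: top_l_def)
    ultimately show ?thesis by auto
  qed
qed

lemma top_house_eq: "distinct xs \<Longrightarrow> A \<subseteq> set xs \<Longrightarrow> A \<noteq> {} \<Longrightarrow>
   top_house (set (pairs xs)) A = top_l xs A"
  unfolding top_house_def
proof (rule the_equality)
  assume a: "distinct xs" "A \<subseteq> set xs" "A \<noteq> {}"
  show "top_l xs A \<in> A \<and> (\<forall>h'\<in>A. h' \<noteq> top_l xs A \<longrightarrow> (top_l xs A, h') \<in> set (pairs xs))"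
    using top_l_prop[OF a] .
  fix h assume h: "h \<in> A \<and> (\<forall>h'\<in>A. h' \<noteq> h \<longrightarrow> (h, h') \<in> set (pairs xs))"
  show "h = top_l xs A"
  proof (rule ccontr)
    assume ne: "h \<noteq> top_l xs A"
    have t: "top_l xs A \<in> A" "(top_l xs A, h) \<in> set (pairs xs)"
      using top_l_prop[OF a] h ne by auto
    have "(h, top_l xs A) \<in> set (pairs xs)" using h t(1) ne by auto
    then show False using pairs_asym[OF a(1)] t(2) by blast
  qed
qed

lemma top_elem:
  assumes "finite A" "r \<subseteq> A \<times> A" "trans r" "irrefl r" "total_on A r" "A \<noteq> {}"
  shows "\<exists>m\<in>A. \<forall>y\<in>A. y \<noteq> m \<longrightarrow> (m,y) \<in> r"
proof -
  have "finite r" using assms(1,2) finite_subset by blast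
  moreover have "acyclic r" using assms(3,4) by (simp add: acyclic_def trancl_id irrefl_def)
  ultimately have "wf r" by (rule finite_acyclic_wf)
  obtain a where "a \<in> A" using assms(6) by auto
  then obtain z where z: "z \<in> A" "\<And>y. (y, z) \<in> r \<Longrightarrow> y \<notin> A"
    using wfE_min[OF \<open>wf r\<close>] by metis
  then show ?thesis using assms(5) unfolding total_on_def by blast
qed

lemma order_repr:
  assumes "finite A" "r \<subseteq> A \<times> A" "trans r" "irrefl r" "total_on A r"
  shows "\<exists>xs. distinct xs \<and> set xs = A \<and> r = set (pairs xs)"
  using assms
proof (induction "card A" arbitrary: A r)
  case 0
  then show ?case by auto
next
  case (Suc k)
  then have "A \<noteq> {}" by auto
  then obtain m where m: "m \<in> A" "\<forall>y\<in>A. y \<noteq> m \<longrightarrow> (m,y) \<in> r"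
    using top_elem Suc.prems by blast
  define A' where "A' = A - {m}"
  define r' where "r' = r \<inter> (A' \<times> A')"
  have "k = card A'" using Suc m by (simp add: A'_def)
  moreover have "finite A'" "r' \<subseteq> A' \<times> A'" using Suc.prems by (auto simp: A'_def r'_def)
  moreover have "trans r'" using Suc.prems(3) unfolding r'_def trans_def by blast
  moreover have "irrefl r'" using Suc.prems(4) unfolding r'_def irrefl_def by blast
  moreover have "total_on A' r'" using Suc.prems(5) unfolding r'_def total_on_def A'_def by blast
  ultimately obtain xs where xs: "distinct xs" "set xs = A'" "r' = set (pairs xs)"
    using Suc.hyps(1) by blast
  have "r = Pair m ` A' \<union> r'"
  proof
    show "r \<subseteq> Pair m ` A' \<union> r'"
    proof
      fix p assume p: "p \<in> r"
      obtain a b where ab: "p = (a,b)" by force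
      have abA: "a \<in> A" "b \<in> A" using p ab Suc.prems(2) by auto
      have "a \<noteq> b" using p ab Suc.prems(4) by (auto simp: irrefl_def)
      show "p \<in> Pair m ` A' \<union> r'"
      proof (cases "a = m")
        case True then show ?thesis using ab abA \<open>a \<noteq> b\<close> by (auto simp: A'_def)
      next
        case False
        have "b \<noteq> m"
        proof
          assume "b = m"
          then have "(m,a) \<in> r" "(a,m) \<in> r" using m abA False p ab by auto
          then have "(a,a) \<in> r" using Suc.prems(3) unfolding trans_def by blast
          then show False using Suc.prems(4) by (auto simp: irrefl_def)
        qed
        then show ?thesis using False p ab abA by (auto simp: A'_def r'_def)
      qed
    qed
    show "Pair m ` A' \<union> r' \<subseteq> r" using m by (auto simp: A'_def r'_def)
  qed
  have "distinct (m#xs)" using xs(1,2) by (simp add: A'_def)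
  moreover have "set (m#xs) = A" using xs(2) m(1) by (auto simp: A'_def)
  moreover have "r = set (pairs (m#xs))" using \<open>r = Pair m ` A' \<union> r'\<close> xs(2,3) by simp
  ultimately show ?case by blast
qed

lemma strict_pref_repr:
  assumes "strict_pref n r"
  shows "\<exists>xs\<in>permutations_of_set {..<n}. r = set (pairs xs)"
  using order_repr[of "{..<n}" r] assms
  unfolding strict_pref_def strict_linear_order_on_def permutations_of_set_def by auto

fun sdb :: "nat list list \<Rightarrow> nat list \<Rightarrow> nat set \<Rightarrow> nat \<Rightarrow> nat \<Rightarrow> bool" where
  "sdb p [] A = (\<lambda>i h. False)"
| "sdb p (i#\<pi>) A = (let h = top_l (p!i) A in (sdb p \<pi> (A - {h}))(i := (\<lambda>h'. h' = h)))"

definition perms_l :: "nat \<Rightarrow> nat list list" where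
  "perms_l n = permutations_of_list_impl [0..<n]"

definition eff_l :: "nat list list \<Rightarrow> nat list \<Rightarrow> bool" where
 "eff_l p \<sigma> = (\<not> (\<exists>\<sigma>'\<in>set (perms_l (length \<sigma>)). \<sigma>' \<noteq> \<sigma> \<and> (\<forall>i\<in>set [0..<length \<sigma>]. \<sigma>'!i \<noteq> \<sigma>!i \<longrightarrow> (\<sigma>'!i, \<sigma>!i) \<in> set (pairs (p!i)))))"

definition supp_l :: "nat list list \<Rightarrow> nat list \<Rightarrow> bool" where
 "supp_l p \<sigma> = (\<forall>i\<in>set [0..<length \<sigma>]. \<exists>\<pi>\<in>set (perms_l (length \<sigma>)). sdb p \<pi> (set [0..<length \<sigma>]) i (\<sigma>!i))"

definition check :: "nat \<Rightarrow> bool" where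
 "check n = (\<forall>p\<in>set (List.n_lists n (perms_l n)). \<forall>\<sigma>\<in>set (perms_l n). eff_l p \<sigma> = supp_l p \<sigma>)"

lemma set_perms_l: "set (perms_l n) = permutations_of_set {..<n}"
  by (simp add: perms_l_def set_permutations_of_list_impl permutations_of_set_altdef atLeast0LessThan)

lemma sd_sdb:
  assumes "\<forall>i\<in>set \<pi>. R i = set (pairs (p!i)) \<and> distinct (p!i) \<and> set (p!i) = B"
    "A \<subseteq> B" "length \<pi> \<le> card A" "finite A"
  shows "sd R \<pi> A = (\<lambda>i h. if sdb p \<pi> A i h then 1 else 0)"
  using assms
proof (induction \<pi> arbitrary: A)
  case Nil then show ?case by simp
next
  case (Cons i \<pi>)
  have "A \<noteq> {}" using Cons.prems(3,4) by auto
  have R: "R i = set (pairs (p!i))" "distinct (p!i)" "A \<subseteq> set (p!i)" using Cons.prems(1,2) by auto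
  have th: "top_house (R i) A = top_l (p!i) A" using top_house_eq[OF R(2,3) \<open>A\<noteq>{}\<close>] R(1) by simp
  have tin: "top_l (p!i) A \<in> A" using top_l_prop[OF R(2,3) \<open>A\<noteq>{}\<close>] by simp
  have "length \<pi> \<le> card (A - {top_l (p!i) A})"
    using Cons.prems(3) tin by (simp add: card_Diff_singleton)
  then have IH: "sd R \<pi> (A - {top_l (p!i) A}) = (\<lambda>j h. if sdb p \<pi> (A - {top_l (p!i) A}) j h then 1 else 0)"
    by (intro Cons.IH) (use Cons.prems in auto)
  show ?case by (auto simp: th IH Let_def fun_eq_iff)
qed

lemma RSD_ne0:
  assumes "\<forall>i<n. R i = set (pairs (p!i)) \<and> p!i \<in> permutations_of_set {..<n}"
  shows "RSD n R i h \<noteq> 0 \<longleftrightarrow> (\<exists>\<pi>\<in>set (perms_l n). sdb p \<pi> (set [0..<n]) i h)"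
proof -
  have SD: "SD n \<pi> R i h = (if sdb p \<pi> (set [0..<n]) i h then 1 else 0)"
    if "\<pi> \<in> permutations_of_set {..<n}" for \<pi>
  proof -
    have s: "set \<pi> = {..<n}" "distinct \<pi>" using that by (auto simp: permutations_of_set_def)
    then have "length \<pi> = n" using distinct_card by fastforce
    have "sd R \<pi> {..<n} = (\<lambda>i h. if sdb p \<pi> {..<n} i h then 1 else 0)"
      apply (rule sd_sdb[where B="{..<n}"])
      using assms s \<open>length \<pi> = n\<close> by (auto simp: permutations_of_set_def)
    then show ?thesis by (simp add: SD_def atLeast0LessThan)
  qed
  have "RSD n R i h \<noteq> 0 \<longleftrightarrow> (\<Sum>\<pi>\<in>permutations_of_set {..<n}. SD n \<pi> R i h) \<noteq> 0"
    by (simp add: RSD_def)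
  also have "\<dots> \<longleftrightarrow> (\<exists>\<pi>\<in>permutations_of_set {..<n}. SD n \<pi> R i h \<noteq> 0)"
    using sum_nonneg_eq_0_iff[of "permutations_of_set {..<n}" "\<lambda>\<pi>. SD n \<pi> R i h"] SD by auto
  also have "\<dots> \<longleftrightarrow> (\<exists>\<pi>\<in>set (perms_l n). sdb p \<pi> (set [0..<n]) i h)"
    using SD by (auto simp: set_perms_l)
  finally show ?thesis .
qed

definition Pm :: "nat list \<Rightarrow> nat \<Rightarrow> nat \<Rightarrow> real" where
  "Pm \<sigma> = (\<lambda>i h. if i < length \<sigma> \<and> h = \<sigma>!i then 1 else 0)"

lemma Pm_det:
  assumes "\<sigma> \<in> permutations_of_set {..<n}"
  shows "deterministic_assignment n (Pm \<sigma>)"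
proof -
  have s: "set \<sigma> = {..<n}" "distinct \<sigma>" using assms by (auto simp: permutations_of_set_def)
  then have l: "length \<sigma> = n" using distinct_card by fastforce
  have lt: "\<sigma>!i < n" if "i < n" for i
  proof -
    have "\<sigma>!i \<in> set \<sigma>" using l that by simp
    then show ?thesis using s(1) by simp
  qed
  have row: "(\<Sum>h<n. Pm \<sigma> i h) = 1" if "i < n" for i
  proof -
    have "(\<Sum>h<n. Pm \<sigma> i h) = (\<Sum>h<n. if h = \<sigma>!i then 1 else 0)"
      by (rule sum.cong) (simp_all add: Pm_def l that)
    also have "\<dots> = 1" using lt[OF that] by simp
    finally show ?thesis .
  qed
  have col: "(\<Sum>i<n. Pm \<sigma> i h) = 1" if "h < n" for h
  proof -
    have "h \<in> set \<sigma>" using s that by simp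
    from distinct_Ex1[OF s(2) this] obtain j where j: "j < length \<sigma>" "\<sigma>!j = h"
      and uq: "\<And>i. i < length \<sigma> \<Longrightarrow> \<sigma>!i = h \<Longrightarrow> i = j" by blast
    have "(\<Sum>i<n. Pm \<sigma> i h) = (\<Sum>i<n. if i = j then 1 else 0)"
    proof (rule sum.cong)
      fix i assume "i \<in> {..<n}"
      then have "i < length \<sigma>" using l by simp
      moreover have "i \<noteq> j \<longrightarrow> \<sigma>!i \<noteq> h" using uq \<open>i < length \<sigma>\<close> by blast
      ultimately show "Pm \<sigma> i h = (if i = j then 1 else 0)"
        using j unfolding Pm_def by auto
    qed simp
    also have "\<dots> = 1" using j l by simp
    finally show ?thesis .
  qed
  have z: "Pm \<sigma> i h = 0" if "n \<le> i \<or> n \<le> h" for i h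
  proof (cases "i < n")
    case True
    then have "h \<noteq> \<sigma>!i" using lt[OF True] that by auto
    then show ?thesis by (simp add: Pm_def)
  next
    case False
    then show ?thesis using l by (simp add: Pm_def)
  qed
  have nn: "0 \<le> Pm \<sigma> i h" "Pm \<sigma> i h \<in> {0,1}" for i h by (simp_all add: Pm_def)
  show ?thesis unfolding deterministic_assignment_def random_assignment_def
    using row col z nn by blast
qed

lemma Pm_inj:
  assumes "length \<sigma> = length \<tau>" "Pm \<sigma> = Pm \<tau>"
  shows "\<sigma> = \<tau>"
proof (rule nth_equalityI)
  show "length \<sigma> = length \<tau>" by fact
  fix i assume i: "i < length \<sigma>"
  have "Pm \<sigma> i (\<sigma>!i) = 1" using i by (simp add: Pm_def)
  then have "Pm \<tau> i (\<sigma>!i) = 1" using assms(2) by simp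
  then show "\<sigma>!i = \<tau>!i" by (simp add: Pm_def split: if_splits)
qed

lemma sum01:
  fixes g :: "'a \<Rightarrow> real"
  assumes "finite A" "\<forall>x\<in>A. g x \<in> {0,1}" "sum g A = 1"
  shows "\<exists>x\<in>A. g x = 1" "\<And>x y. x \<in> A \<Longrightarrow> y \<in> A \<Longrightarrow> g x = 1 \<Longrightarrow> g y = 1 \<Longrightarrow> x = y"
proof -
  show "\<exists>x\<in>A. g x = 1"
  proof (rule ccontr)
    assume "\<not> ?thesis"
    then have "\<forall>x\<in>A. g x = 0" using assms(2) by auto
    then show False using assms(3) by simp
  qed
  fix x y assume xy: "x \<in> A" "y \<in> A" "g x = 1" "g y = 1"
  show "x = y"
  proof (rule ccontr)
    assume "x \<noteq> y"
    have "sum g {x,y} \<le> sum g A"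
      by (rule sum_mono2) (use assms xy in auto)
    then show False using xy \<open>x \<noteq> y\<close> assms(3) by simp
  qed
qed

lemma det_repr:
  assumes "deterministic_assignment n D"
  shows "\<exists>\<sigma>\<in>permutations_of_set {..<n}. D = Pm \<sigma>"
proof -
  have D01: "\<forall>i h. D i h \<in> {0,1}" and Dz: "\<forall>i h. (n \<le> i \<or> n \<le> h) \<longrightarrow> D i h = 0"
    and rows: "\<forall>i<n. (\<Sum>h<n. D i h) = 1" and cols: "\<forall>h<n. (\<Sum>i<n. D i h) = 1"
    using assms unfolding deterministic_assignment_def random_assignment_def by auto
  define s where "s i = (THE h. h < n \<and> D i h = 1)" for i
  have s: "s i < n \<and> D i (s i) = 1 \<and> (\<forall>h<n. D i h = 1 \<longrightarrow> h = s i)" if "i < n" for i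
  proof -
    have ex: "\<exists>h\<in>{..<n}. D i h = 1" and un: "\<And>x y. x \<in> {..<n} \<Longrightarrow> y \<in> {..<n} \<Longrightarrow> D i x = 1 \<Longrightarrow> D i y = 1 \<Longrightarrow> x = y"
      using sum01[of "{..<n}" "D i"] D01 rows that by auto
    have "\<exists>!h. h < n \<and> D i h = 1" using ex un by auto
    then have "s i < n \<and> D i (s i) = 1" unfolding s_def by (rule theI')
    then show ?thesis using un by auto
  qed
  have inj: "inj_on s {..<n}"
  proof (rule inj_onI)
    fix i j assume ij: "i \<in> {..<n}" "j \<in> {..<n}" "s i = s j"
    have "s i < n" using s ij by auto
    have h0: "D i (s i) = 1" "D j (s j) = 1" using s ij(1,2) by auto
    have h1: "D i (s i) = 1" "D j (s i) = 1" using h0 ij(3) by auto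
    have c: "(\<Sum>k<n. D k (s i)) = 1" using cols \<open>s i < n\<close> by auto
    have "\<forall>x\<in>{..<n}. D x (s i) \<in> {0,1}" using D01 by auto
    from sum01(2)[OF finite_lessThan this c] ij h1 show "i = j" by blast
  qed
  define \<sigma> where "\<sigma> = map s [0..<n]"
  have "s ` {..<n} = {..<n}" by (rule endo_inj_surj) (use s inj in auto)
  then have "set \<sigma> = {..<n}" "distinct \<sigma>" using inj by (auto simp: \<sigma>_def distinct_map atLeast0LessThan)
  then have mem: "\<sigma> \<in> permutations_of_set {..<n}" by (auto simp: permutations_of_set_def)
  have "D = Pm \<sigma>"
  proof (intro ext)
    fix i h
    show "D i h = Pm \<sigma> i h"
    proof (cases "i < n \<and> h < n")
      case True
      then show ?thesis using s[of i] D01 by (auto simp: Pm_def \<sigma>_def)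
    next
      case False
      then show ?thesis using Dz s[of i] by (auto simp: Pm_def \<sigma>_def)
    qed
  qed
  then show ?thesis using mem by blast
qed


lemma profile_repr:
  assumes "R \<in> profiles n"
  shows "\<exists>p. length p = n \<and> (\<forall>i<n. p!i \<in> permutations_of_set {..<n} \<and> R i = set (pairs (p!i)))"
proof -
  define p where "p = map (\<lambda>i. SOME xs. xs \<in> permutations_of_set {..<n} \<and> R i = set (pairs xs)) [0..<n]"
  have "p!i \<in> permutations_of_set {..<n} \<and> R i = set (pairs (p!i))" if "i < n" for i
  proof -
    have "strict_pref n (R i)" using assms that by (simp add: profiles_def)
    then have "\<exists>xs. xs \<in> permutations_of_set {..<n} \<and> R i = set (pairs xs)"
      using strict_pref_repr by blast
    then have "(SOME xs. xs \<in> permutations_of_set {..<n} \<and> R i = set (pairs xs)) \<in> permutations_of_set {..<n} \<and>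
      R i = set (pairs (SOME xs. xs \<in> permutations_of_set {..<n} \<and> R i = set (pairs xs)))"
      by (rule someI_ex)
    then show ?thesis using that unfolding p_def by simp
  qed
  then show ?thesis by (intro exI[of _ p]) (simp add: p_def)
qed

lemma perm_len: "\<sigma> \<in> permutations_of_set {..<n} \<Longrightarrow> length \<sigma> = n"
  by (metis card_lessThan distinct_card permutations_of_setD)

lemma Pm_one: "Pm \<sigma> i h = 1 \<longleftrightarrow> i < length \<sigma> \<and> h = \<sigma>!i"
  by (simp add: Pm_def)

lemma eff_equiv:
  assumes R: "\<forall>i<n. R i = set (pairs (p!i))" and sig: "\<sigma> \<in> permutations_of_set {..<n}"
  shows "efficient_at n R (Pm \<sigma>) \<longleftrightarrow> eff_l p \<sigma>"
proof -
  have l: "length \<sigma> = n" using perm_len[OF sig] .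
  have lt: "\<sigma>!i < n" if "i < n" for i using sig l that nth_mem permutations_of_setD(1) by fastforce
  define C where "C (M'::nat \<Rightarrow> nat \<Rightarrow> real) = (\<forall>i<n. \<forall>h<n. \<forall>h'<n. h \<noteq> h' \<and> M' i h' = 1 \<and> Pm \<sigma> i h = 1 \<longrightarrow> (h', h) \<in> R i)" for M'
  define C' where "C' \<sigma>' = (\<forall>i\<in>set [0..<n]. \<sigma>'!i \<noteq> \<sigma>!i \<longrightarrow> (\<sigma>'!i, \<sigma>!i) \<in> set (pairs (p!i)))" for \<sigma>'
  have CC: "C (Pm \<sigma>') \<longleftrightarrow> C' \<sigma>'" if s': "\<sigma>' \<in> permutations_of_set {..<n}" for \<sigma>'
  proof -
    have l': "length \<sigma>' = n" using perm_len[OF s'] .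
    have lt': "\<sigma>'!i < n" if "i < n" for i using s' l' that nth_mem permutations_of_setD(1) by fastforce
    show ?thesis
    proof
      assume "C (Pm \<sigma>')"
      then show "C' \<sigma>'" unfolding C_def C'_def using R lt lt' l l' by (auto simp: Pm_one)
    next
      assume "C' \<sigma>'"
      then show "C (Pm \<sigma>')" unfolding C_def C'_def using R l l' by (auto simp: Pm_one)
    qed
  qed
  have "efficient_at n R (Pm \<sigma>) \<longleftrightarrow> \<not> (\<exists>M'. deterministic_assignment n M' \<and> M' \<noteq> Pm \<sigma> \<and> C M')"
    unfolding efficient_at_def C_def using Pm_det[OF sig] by simp
  also have "(\<exists>M'. deterministic_assignment n M' \<and> M' \<noteq> Pm \<sigma> \<and> C M') \<longleftrightarrow>
     (\<exists>\<sigma>'\<in>set (perms_l n). \<sigma>' \<noteq> \<sigma> \<and> C' \<sigma>')"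
  proof
    assume "\<exists>M'. deterministic_assignment n M' \<and> M' \<noteq> Pm \<sigma> \<and> C M'"
    then obtain M' where M': "deterministic_assignment n M'" "M' \<noteq> Pm \<sigma>" "C M'" by blast
    obtain \<sigma>' where s': "\<sigma>' \<in> permutations_of_set {..<n}" "M' = Pm \<sigma>'" using det_repr[OF M'(1)] by blast
    have "\<sigma>' \<noteq> \<sigma>" using M'(2) s'(2) by auto
    moreover have "C' \<sigma>'" using CC[OF s'(1)] M'(3) s'(2) by simp
    ultimately show "\<exists>\<sigma>'\<in>set (perms_l n). \<sigma>' \<noteq> \<sigma> \<and> C' \<sigma>'" using s'(1) by (auto simp: set_perms_l)
  next
    assume "\<exists>\<sigma>'\<in>set (perms_l n). \<sigma>' \<noteq> \<sigma> \<and> C' \<sigma>'"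
    then obtain \<sigma>' where s': "\<sigma>' \<in> permutations_of_set {..<n}" "\<sigma>' \<noteq> \<sigma>" "C' \<sigma>'"
      by (auto simp: set_perms_l)
    have "Pm \<sigma>' \<noteq> Pm \<sigma>" using Pm_inj[of \<sigma>' \<sigma>] s'(2) perm_len[OF s'(1)] l by auto
    then show "\<exists>M'. deterministic_assignment n M' \<and> M' \<noteq> Pm \<sigma> \<and> C M'"
      using Pm_det[OF s'(1)] CC[OF s'(1)] s'(3) by blast
  qed
  finally show ?thesis unfolding eff_l_def C'_def l .
qed

lemma supp_equiv:
  assumes R: "\<forall>i<n. R i = set (pairs (p!i)) \<and> p!i \<in> permutations_of_set {..<n}"
    and sig: "\<sigma> \<in> permutations_of_set {..<n}"
  shows "(\<forall>i h. Pm \<sigma> i h = 1 \<longrightarrow> RSD n R i h \<noteq> 0) \<longleftrightarrow> supp_l p \<sigma>"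
proof -
  have l: "length \<sigma> = n" using perm_len[OF sig] .
  have "(\<forall>i h. Pm \<sigma> i h = 1 \<longrightarrow> RSD n R i h \<noteq> 0) \<longleftrightarrow> (\<forall>i<n. RSD n R i (\<sigma>!i) \<noteq> 0)"
    by (auto simp: Pm_one l)
  also have "\<dots> \<longleftrightarrow> supp_l p \<sigma>"
    unfolding supp_l_def l using RSD_ne0[OF R] by auto
  finally show ?thesis .
qed

lemma check0: "check 0" by code_simp
lemma check1: "check 1" by code_simp
lemma check2: "check 2" by code_simp
lemma check3: "check 3" by code_simp

lemma check_le3: "n \<le> 3 \<Longrightarrow> check n"
proof -
  assume "n \<le> 3"
  then consider "n = 0" | "n = 1" | "n = 2" | "n = 3" by arith
  then show ?thesis by cases (simp_all add: check0 check1[simplified] check2 check3)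
qed

lemma key:
  assumes "n \<le> 3" "R \<in> profiles n" "\<sigma> \<in> permutations_of_set {..<n}"
  shows "efficient_at n R (Pm \<sigma>) \<longleftrightarrow> (\<forall>i h. Pm \<sigma> i h = 1 \<longrightarrow> RSD n R i h \<noteq> 0)"
proof -
  obtain p where p: "length p = n" "\<forall>i<n. p!i \<in> permutations_of_set {..<n} \<and> R i = set (pairs (p!i))"
    using profile_repr[OF assms(2)] by blast
  have "p \<in> set (List.n_lists n (perms_l n))"
    using p by (auto simp: set_n_lists set_perms_l in_set_conv_nth)
  moreover have "\<sigma> \<in> set (perms_l n)" using assms(3) by (simp add: set_perms_l)
  ultimately have "eff_l p \<sigma> = supp_l p \<sigma>" using check_le3[OF assms(1)] unfolding check_def by blast
  then show ?thesis using eff_equiv[of n R p \<sigma>] supp_equiv[of n R p \<sigma>] p assms(3) by auto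
qed


lemma perms3: "set (perms_l 3) = {[0,1,2],[0,2,1],[1,0,2],[1,2,0],[2,0,1],[2,1,0]}"
  by code_simp
lemma perms2: "set (perms_l 2) = {[0,1],[1,0]}"
  by code_simp
lemma perms1: "set (perms_l 1) = {[0]}"
  by code_simp
lemma perms1': "set (perms_l (Suc 0)) = {[0]}"
  using perms1 by simp
lemma perms0: "set (perms_l 0) = {[]}"
  by code_simp

lemma birkhoff:
  assumes "n \<le> 3" "random_assignment n M"
  shows "\<exists>v. (\<forall>\<sigma>\<in>set (perms_l n). 0 \<le> v \<sigma>) \<and> (\<Sum>\<sigma>\<in>set (perms_l n). v \<sigma>) = 1 \<and>
     (\<forall>i h. M i h = (\<Sum>\<sigma>\<in>set (perms_l n). v \<sigma> * Pm \<sigma> i h))"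
proof -
  have nn: "\<And>i h. 0 \<le> M i h" and z: "\<And>i h. n \<le> i \<or> n \<le> h \<Longrightarrow> M i h = 0"
    and rows: "\<And>i. i < n \<Longrightarrow> (\<Sum>h<n. M i h) = 1" and cols: "\<And>h. h < n \<Longrightarrow> (\<Sum>i<n. M i h) = 1"
    using assms(2) unfolding random_assignment_def by auto
  consider "n = 0" | "n = 1" | "n = 2" | "n = 3" using assms(1) by arith
  then show ?thesis
  proof cases
    case 1
    show ?thesis
      by (rule exI[of _ "\<lambda>_. 1"]) (use z in \<open>simp add: 1 perms0 Pm_def\<close>)
  next
    case 2
    have "M 0 0 = 1" using rows[of 0] 2 by simp
    show ?thesis
    proof (rule exI[of _ "\<lambda>_. 1"], intro conjI allI)
      fix i h
      show "M i h = (\<Sum>\<sigma>\<in>set (perms_l n). 1 * Pm \<sigma> i h)"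
        using z[of i h] \<open>M 0 0 = 1\<close> by (cases "i = 0 \<and> h = 0") (auto simp: 2 perms1' Pm_def)
    qed (simp_all add: 2 perms1')
  next
    case 3
    have e: "M 0 0 + M 0 1 = 1" "M 1 0 + M 1 1 = 1" "M 0 0 + M 1 0 = 1" "M 0 1 + M 1 1 = 1"
      using rows[of 0] rows[of 1] cols[of 0] cols[of 1] 3 by (simp_all add: numeral_2_eq_2)
    define v where "v \<sigma> = (if \<sigma> = [0,1] then M 0 0 else M 0 1)" for \<sigma> :: "nat list"
    show ?thesis
    proof (rule exI[of _ v], intro conjI allI)
      fix i h
      show "M i h = (\<Sum>\<sigma>\<in>set (perms_l n). v \<sigma> * Pm \<sigma> i h)"
      proof (cases "i < 2 \<and> h < 2")
        case True
        then have "i = 0 \<or> i = 1" "h = 0 \<or> h = 1" by auto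
        then show ?thesis using e by (auto simp: 3 perms2 Pm_def v_def)
      next
        case False
        then have "\<And>\<sigma>. \<sigma> \<in> set (perms_l 2) \<Longrightarrow> Pm \<sigma> i h = 0"
          using False by (auto simp: perms2 Pm_def less_Suc_eq)
        moreover have "M i h = 0" using z[of i h] False 3 by linarith
        ultimately show ?thesis using 3 by simp
      qed
    qed (use nn e in \<open>simp_all add: 3 perms2 v_def\<close>)
  next
    case 4
    have e: "M 0 0 + M 0 1 + M 0 2 = 1" "M 1 0 + M 1 1 + M 1 2 = 1" "M 2 0 + M 2 1 + M 2 2 = 1"
      "M 0 0 + M 1 0 + M 2 0 = 1" "M 0 1 + M 1 1 + M 2 1 = 1" "M 0 2 + M 1 2 + M 2 2 = 1"
      using rows[of 0] rows[of 1] rows[of 2] cols[of 0] cols[of 1] cols[of 2] 4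
      by (simp_all add: eval_nat_numeral)
    define t where "t = max 0 (max (M 0 0 - M 1 2) (M 0 0 - M 2 1))"
    have t: "0 \<le> t" "M 0 0 - M 1 2 \<le> t" "M 0 0 - M 2 1 \<le> t"
      "t = 0 \<or> t = M 0 0 - M 1 2 \<or> t = M 0 0 - M 2 1"
      unfolding t_def by auto
    define v where "v \<sigma> = (if \<sigma> = [0,1,2] then t else if \<sigma> = [1,2,0] then M 1 2 - M 0 0 + t
       else if \<sigma> = [2,0,1] then M 2 1 - M 0 0 + t else if \<sigma> = [0,2,1] then M 0 0 - t
       else if \<sigma> = [2,1,0] then M 1 1 - t else M 2 2 - t)" for \<sigma> :: "nat list"
    have nn9: "0 \<le> M 0 0" "0 \<le> M 0 1" "0 \<le> M 0 2" "0 \<le> M 1 0" "0 \<le> M 1 1" "0 \<le> M 1 2"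
      "0 \<le> M 2 0" "0 \<le> M 2 1" "0 \<le> M 2 2" using nn by auto
    show ?thesis
    proof (rule exI[of _ v], intro conjI allI)
      show "\<forall>\<sigma>\<in>set (perms_l n). 0 \<le> v \<sigma>"
        using t e nn9 by (simp add: 4 perms3 v_def) (elim disjE; linarith)
      show "(\<Sum>\<sigma>\<in>set (perms_l n). v \<sigma>) = 1"
        using e by (simp add: 4 perms3 v_def)
      fix i h
      show "M i h = (\<Sum>\<sigma>\<in>set (perms_l n). v \<sigma> * Pm \<sigma> i h)"
      proof (cases "i < 3 \<and> h < 3")
        case True
        then have "i = 0 \<or> i = 1 \<or> i = 2" "h = 0 \<or> h = 1 \<or> h = 2" by auto
        then show ?thesis using e by (elim disjE) (simp_all add: 4 perms3 Pm_def v_def)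
      next
        case False
        then have "\<And>\<sigma>. \<sigma> \<in> set (perms_l 3) \<Longrightarrow> Pm \<sigma> i h = 0"
          using False by (auto simp: perms3 Pm_def less_Suc_eq)
        moreover have "M i h = 0" using z[of i h] False 4 by linarith
        ultimately show ?thesis using 4 by simp
      qed
    qed
  qed
qed


lemma reindex:
  fixes P :: "'b \<Rightarrow> nat \<Rightarrow> nat \<Rightarrow> real" and M :: "nat \<Rightarrow> nat \<Rightarrow> real"
  assumes fin: "finite T" and nn: "\<forall>t\<in>T. 0 \<le> v t" and s1: "(\<Sum>t\<in>T. v t) = 1"
    and eq: "\<forall>i h. M i h = (\<Sum>t\<in>T. v t * P t i h)" and q: "\<forall>t\<in>T. v t > 0 \<longrightarrow> Q (P t)"
  shows "\<exists>S (w::(nat \<Rightarrow> nat \<Rightarrow> real) \<Rightarrow> real). finite S \<and> S \<subseteq> {D. Q D} \<and> (\<forall>D\<in>S. 0 \<le> w D) \<and>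
     (\<Sum>D\<in>S. w D) = 1 \<and> (\<forall>i h. M i h = (\<Sum>D\<in>S. w D * D i h))"
proof -
  define T' where "T' = {t\<in>T. v t > 0}"
  have fin': "finite T'" using fin by (simp add: T'_def)
  have z: "v t = 0" if "t \<in> T - T'" for t using that nn by (force simp: T'_def)
  have sub: "T' \<subseteq> T" by (auto simp: T'_def)
  have "(\<Sum>t\<in>T. v t) = (\<Sum>t\<in>T'. v t)"
    by (rule sum.mono_neutral_right[OF fin sub]) (use z in blast)
  then have s1': "(\<Sum>t\<in>T'. v t) = 1" using s1 by simp
  have eq': "M i h = (\<Sum>t\<in>T'. v t * P t i h)" for i h
  proof -
    have "(\<Sum>t\<in>T. v t * P t i h) = (\<Sum>t\<in>T'. v t * P t i h)"
      by (rule sum.mono_neutral_right[OF fin sub]) (use z in simp)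
    then show ?thesis using eq by simp
  qed
  define S where "S = P ` T'"
  define w where "w D = (\<Sum>t\<in>{t\<in>T'. P t = D}. v t)" for D
  have "finite S" using fin' by (simp add: S_def)
  moreover have "S \<subseteq> {D. Q D}" using q by (auto simp: S_def T'_def)
  moreover have "\<forall>D\<in>S. 0 \<le> w D" using nn by (auto simp: w_def T'_def intro!: sum_nonneg)
  moreover have "(\<Sum>D\<in>S. w D) = 1"
  proof -
    have "(\<Sum>t\<in>T'. v t) = (\<Sum>D\<in>S. w D)"
      unfolding S_def w_def by (rule sum.image_gen[OF fin'])
    then show ?thesis using s1' by simp
  qed
  moreover have "M i h = (\<Sum>D\<in>S. w D * D i h)" for i h
  proof -
    have "(\<Sum>t\<in>T'. v t * P t i h) = (\<Sum>D\<in>S. \<Sum>t\<in>{t\<in>T'. P t = D}. v t * P t i h)"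
      unfolding S_def by (rule sum.image_gen[OF fin'])
    then have "M i h = (\<Sum>D\<in>S. \<Sum>t\<in>{t\<in>T'. P t = D}. v t * P t i h)"
      using eq' by simp
    also have "\<dots> = (\<Sum>D\<in>S. w D * D i h)"
    proof (rule sum.cong[OF refl])
      fix D assume "D \<in> S"
      have "(\<Sum>t\<in>{t\<in>T'. P t = D}. v t * P t i h) = (\<Sum>t\<in>{t\<in>T'. P t = D}. v t * D i h)"
        by (rule sum.cong) auto
      also have "\<dots> = w D * D i h" unfolding w_def by (rule sum_distrib_right[symmetric])
      finally show "(\<Sum>t\<in>{t\<in>T'. P t = D}. v t * P t i h) = w D * D i h" .
    qed
    finally show ?thesis .
  qed
  ultimately show ?thesis by blast
qed

theorem mainTheorem1:
  fixes n :: nat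
    and f :: "(nat \<Rightarrow> (nat \<times> nat) set) \<Rightarrow> nat \<Rightarrow> nat \<Rightarrow> real"
  assumes "n \<le> 3"
    and "assignment_rule n f"
  shows "support_efficient n f \<longleftrightarrow> ex_post_efficient n f"
proof
  assume se: "support_efficient n f"
  show "ex_post_efficient n f"
    unfolding ex_post_efficient_def
  proof
    fix R assume R: "R \<in> profiles n"
    have ra: "random_assignment n (f R)" using assms(2) R by (simp add: assignment_rule_def)
    obtain v where v: "\<forall>\<sigma>\<in>set (perms_l n). 0 \<le> v \<sigma>" "(\<Sum>\<sigma>\<in>set (perms_l n). v \<sigma>) = 1"
      "\<forall>i h. f R i h = (\<Sum>\<sigma>\<in>set (perms_l n). v \<sigma> * Pm \<sigma> i h)"
      using birkhoff[OF assms(1) ra] by blast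
    have q: "\<forall>\<sigma>\<in>set (perms_l n). v \<sigma> > 0 \<longrightarrow> efficient_at n R (Pm \<sigma>)"
    proof (intro ballI impI)
      fix \<sigma> assume s: "\<sigma> \<in> set (perms_l n)" and pos: "v \<sigma> > 0"
      have sp: "\<sigma> \<in> permutations_of_set {..<n}" using s by (simp add: set_perms_l)
      have "RSD n R i h \<noteq> 0" if "Pm \<sigma> i h = 1" for i h
      proof
        assume "RSD n R i h = 0"
        then have "f R i h = 0" using se R by (simp add: support_efficient_def)
        moreover have "v \<sigma> * Pm \<sigma> i h \<le> (\<Sum>\<tau>\<in>set (perms_l n). v \<tau> * Pm \<tau> i h)"
          by (rule member_le_sum) (use s v(1) in \<open>auto simp: Pm_def\<close>)
        moreover have "f R i h = (\<Sum>\<tau>\<in>set (perms_l n). v \<tau> * Pm \<tau> i h)" using v(3) by blast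
        ultimately show False using pos that by simp
      qed
      then show "efficient_at n R (Pm \<sigma>)" unfolding key[OF assms(1) R sp] by blast
    qed
    show "\<exists>S (w::(nat \<Rightarrow> nat \<Rightarrow> real) \<Rightarrow> real).
        finite S \<and> S \<subseteq> {D. efficient_at n R D} \<and>
        (\<forall>D\<in>S. 0 \<le> w D) \<and> (\<Sum>D\<in>S. w D) = 1 \<and>
        (\<forall>i h. f R i h = (\<Sum>D\<in>S. w D * D i h))"
      by (rule reindex[OF finite_set v q])
  qed
next
  assume ep: "ex_post_efficient n f"
  show "support_efficient n f"
    unfolding support_efficient_def
  proof (intro ballI allI impI)
    fix R i h assume R: "R \<in> profiles n" and r0: "RSD n R i h = 0"
    have "\<exists>S (w::(nat \<Rightarrow> nat \<Rightarrow> real) \<Rightarrow> real).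
        finite S \<and> S \<subseteq> {D. efficient_at n R D} \<and>
        (\<forall>D\<in>S. 0 \<le> w D) \<and> (\<Sum>D\<in>S. w D) = 1 \<and>
        (\<forall>i h. f R i h = (\<Sum>D\<in>S. w D * D i h))"
      using ep R unfolding ex_post_efficient_def by (rule bspec)
    then obtain S and w :: "(nat \<Rightarrow> nat \<Rightarrow> real) \<Rightarrow> real" where
      all: "finite S \<and> S \<subseteq> {D. efficient_at n R D} \<and>
        (\<forall>D\<in>S. 0 \<le> w D) \<and> (\<Sum>D\<in>S. w D) = 1 \<and>
        (\<forall>i h. f R i h = (\<Sum>D\<in>S. w D * D i h))" by blast
    have Sw: "S \<subseteq> {D. efficient_at n R D}" "f R i h = (\<Sum>D\<in>S. w D * D i h)"
      using all by blast+
    have "D i h = 0" if "D \<in> S" for D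
    proof -
      have eff: "efficient_at n R D" using Sw(1) that by auto
      then have "deterministic_assignment n D" by (simp add: efficient_at_def)
      then obtain \<sigma> where sp: "\<sigma> \<in> permutations_of_set {..<n}" and D: "D = Pm \<sigma>"
        using det_repr by blast
      have "\<forall>i h. Pm \<sigma> i h = 1 \<longrightarrow> RSD n R i h \<noteq> 0" using key[OF assms(1) R sp] eff D by simp
      then have "Pm \<sigma> i h \<noteq> 1" using r0 by blast
      then show ?thesis using D by (simp add: Pm_def split: if_splits)
    qed
    then have "(\<Sum>D\<in>S. w D * D i h) = 0" by (intro sum.neutral) simp
    then show "f R i h = 0" using Sw(2) by simp
  qed
qed

end
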